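(* Let $O=(Y,D,Z)$ be a random vector with outcome $Y\in\mathbb{R}$, exposure $D\in\mathbb{R}$, and candidate instruments $Z=(Z_1,\dots,Z_p)\in\{0,1\}^p$ (a row vector), $p\ge 2$, with $\mu^*=(\mu_1^*,\dots,\mu_p^* )=\mathbb{E}(Z)$. Suppose the following hold. (ALICE model) There are potential outcomes $Y(d,z)$ for $d\in\mathcal D$, $z\in\{0,1\}^p$, with $Y=Y(D,Z)$, and parameters $\beta^*\in\mathbb{R}$, $\zeta^*,\psi^*\in\mathbb{R}^p$ such that for all $d,d'\in\mathcal D$ and $z,z'\in\{0,1\}^p$, $$Y(d',z')-Y(d,z)=(d'-d)\beta^*+(z'-z)\zeta^*,\qquad \mathbb{E}\{Y(0,0)\mid Z\}=Z\psi^*.$$ (Independent instruments) $Z_1,\dots,Z_p$ are mutually independent. (Interaction relevance) For a fixed integer $q$ with $2\le q\le p$, the $r$-dimensional vector $$M=-\mathbb{E}\{(\bar Z_{2,\mu^*}^\top,\dots,\bar Z_{q,\mu^*}^\top)^\top D\}$$ is nonzero, where $r=\sum_{k=2}^q\binom{p}{k}$. Define the $r$-dimensional moment function $m(O;\beta,\mu^* )=(\bar Z_{2,\mu^*}^\top,\dots,\bar Z_{q,\mu^*}^\top)^\top (Y-D\beta)$. Then $\beta=\beta^*$ is the unique solution in $\beta\in\mathbb{R}$ of the population moment equation $\mathbb{E}\{m(O;\beta,\mu^* )\}=0$.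
   Context: For $1\le k\le p$ and $\mu\in\mathbb{R}^p$, $\bar Z_{k,\mu}$ denotes the column vector (in a fixed order) of all $\binom{p}{k}$ demeaned $k$-th order interactions $\prod_{j\in x}(Z_j-\mu_j)$, $x$ ranging over the subsets of $\{1,\dots,p\}$ of size $k$. All expectations appearing are assumed to exist and be finite. *)

theory Defs
  imports "HOL-Probability.Probability"
begin

definition demeaned_interaction ::
  "(nat \<Rightarrow> 'a \<Rightarrow> real) \<Rightarrow> (nat \<Rightarrow> real) \<Rightarrow> nat set \<Rightarrow> 'a \<Rightarrow> real" where
  "demeaned_interaction Z \<mu> x \<omega> = (\<Prod>j\<in>x. (Z j \<omega> - \<mu> j))"

text \<open>Index set of the stacked vector of interactions of orders 2..q among p instruments.\<close>
definition interaction_index :: "nat \<Rightarrow> nat \<Rightarrow> nat set set" where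
  "interaction_index p q = {x. x \<subseteq> {..<p} \<and> 2 \<le> card x \<and> card x \<le> q}"

definition binvecs :: "nat \<Rightarrow> (nat \<Rightarrow> real) set" where
  "binvecs p = PiE {..<p} (\<lambda>_. {0, 1})"

definition instr_sigma :: "'a measure \<Rightarrow> (nat \<Rightarrow> 'a \<Rightarrow> real) \<Rightarrow> nat \<Rightarrow> 'a measure" where
  "instr_sigma M Z p = vimage_algebra (space M) (\<lambda>\<omega>. restrict (\<lambda>j. Z j \<omega>) {..<p})
      (PiM {..<p} (\<lambda>_. borel))"

end

theory Submission
  imports Defs
begin

theorem theorem1:
  fixes M :: "'a measure"
    and Y D :: "'a \<Rightarrow> real"
    and Z :: "nat \<Rightarrow> 'a \<Rightarrow> real"
    and p q :: nat
    and Dset :: "real set"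
    and Ypo :: "real \<Rightarrow> (nat \<Rightarrow> real) \<Rightarrow> 'a \<Rightarrow> real"
    and \<beta>s :: real
    and \<zeta>s \<psi>s :: "nat \<Rightarrow> real"
  assumes prob: "prob_space M"
    and p2: "2 \<le> p" and q2: "2 \<le> q" and qp: "q \<le> p"
    and Y_rv: "Y \<in> borel_measurable M"
    and D_rv: "D \<in> borel_measurable M"
    and Z_rv: "\<And>j. j < p \<Longrightarrow> Z j \<in> borel_measurable M"
    and Z_bin: "\<And>j \<omega>. j < p \<Longrightarrow> \<omega> \<in> space M \<Longrightarrow> Z j \<omega> \<in> {0, 1}"
    and zero_D: "0 \<in> Dset"
    and D_in: "\<And>\<omega>. \<omega> \<in> space M \<Longrightarrow> D \<omega> \<in> Dset"
    and Y_obs: "\<And>\<omega>. \<omega> \<in> space M \<Longrightarrow> Y \<omega> = Ypo (D \<omega>) (restrict (\<lambda>j. Z j \<omega>) {..<p}) \<omega>"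
    and alice: "\<And>\<omega> d d' z z'. \<omega> \<in> space M \<Longrightarrow> d \<in> Dset \<Longrightarrow> d' \<in> Dset \<Longrightarrow>
        z \<in> binvecs p \<Longrightarrow> z' \<in> binvecs p \<Longrightarrow>
        Ypo d' z' \<omega> - Ypo d z \<omega> = (d' - d) * \<beta>s + (\<Sum>j<p. (z' j - z j) * \<zeta>s j)"
    and Y00_int: "integrable M (Ypo 0 (restrict (\<lambda>_. 0) {..<p}))"
    and cond_exp: "AE \<omega> in M. real_cond_exp M (instr_sigma M Z p) (Ypo 0 (restrict (\<lambda>_. 0) {..<p})) \<omega>
        = (\<Sum>j<p. Z j \<omega> * \<psi>s j)"
    and indep: "prob_space.indep_vars M (\<lambda>_. borel) Z {..<p}"
    and int_Y: "\<And>x. x \<in> interaction_index p q \<Longrightarrow>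
        integrable M (\<lambda>\<omega>. demeaned_interaction Z (\<lambda>j. prob_space.expectation M (Z j)) x \<omega> * Y \<omega>)"
    and int_D: "\<And>x. x \<in> interaction_index p q \<Longrightarrow>
        integrable M (\<lambda>\<omega>. demeaned_interaction Z (\<lambda>j. prob_space.expectation M (Z j)) x \<omega> * D \<omega>)"
    and relevance: "(\<lambda>x\<in>interaction_index p q. - prob_space.expectation M
          (\<lambda>\<omega>. demeaned_interaction Z (\<lambda>j. prob_space.expectation M (Z j)) x \<omega> * D \<omega>))
        \<noteq> (\<lambda>x\<in>interaction_index p q. 0)"
  shows "{\<beta>::real. (\<lambda>x\<in>interaction_index p q. prob_space.expectation M
            (\<lambda>\<omega>. demeaned_interaction Z (\<lambda>j. prob_space.expectation M (Z j)) x \<omega> * (Y \<omega> - D \<omega> * \<beta>)))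
          = (\<lambda>x\<in>interaction_index p q. 0)} = {\<beta>s}"
proof -
  interpret prob_space M by (rule prob)
  define \<mu> where "\<mu> j = expectation (Z j)" for j
  define I where "I = interaction_index p q"
  define W where "W x \<omega> = demeaned_interaction Z \<mu> x \<omega>" for x \<omega>
  define z0 where "z0 = restrict (\<lambda>_. 0::real) {..<p}"
  define Y00 where "Y00 = Ypo 0 z0"
  define F where "F = instr_sigma M Z p"
  define C where "C x = (\<Prod>i\<in>x. 1 + \<bar>\<mu> i\<bar>)" for x
  have [measurable]: "Z j \<in> borel_measurable M" if "j < p" for j using Z_rv that by auto
  have Zint: "integrable M (Z j)" if "j < p" for j
  proof (rule integrable_const_bound[where B=1])
    show "AE \<omega> in M. norm (Z j \<omega>) \<le> 1"
    proof (rule AE_I2)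
      fix \<omega> assume "\<omega> \<in> space M"
      then have "Z j \<omega> \<in> {0,1}" using Z_bin that by auto
      then show "norm (Z j \<omega>) \<le> 1" by auto
    qed
  qed (use that in simp)
  have Wmeas: "W x \<in> borel_measurable M" if "x \<subseteq> {..<p}" for x
    unfolding W_def demeaned_interaction_def using Z_rv that
    by (intro borel_measurable_prod borel_measurable_diff) auto
  have Wbound: "\<bar>W x \<omega>\<bar> \<le> C x" if "x \<subseteq> {..<p}" "\<omega> \<in> space M" for x \<omega>
    unfolding W_def demeaned_interaction_def C_def abs_prod
  proof (rule prod_mono)
    fix i assume "i \<in> x"
    then have "Z i \<omega> \<in> {0,1}" using Z_bin that by auto
    then show "0 \<le> \<bar>Z i \<omega> - \<mu> i\<bar> \<and> \<bar>Z i \<omega> - \<mu> i\<bar> \<le> 1 + \<bar>\<mu> i\<bar>" by auto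
  qed
  have I_sub: "x \<subseteq> {..<p}" and I_card: "2 \<le> card x" and I_fin: "finite x" if "x \<in> I" for x
    using that unfolding I_def interaction_index_def by (auto intro: finite_subset)
  have E0: "(\<integral>\<omega>. W x \<omega> * Z j \<omega> \<partial>M) = 0" if xI: "x \<in> I" and jp: "j < p" for x j
  proof -
    have xs: "x \<subseteq> {..<p}" and xf: "finite x" and xc: "2 \<le> card x"
      using I_sub I_fin I_card xI by auto
    have "card (x - {j}) \<ge> 1" using xc xf card_Diff_singleton_if[of x j] by auto
    then obtain i where i: "i \<in> x" "i \<noteq> j"
      by (metis One_nat_def card.empty DiffE insertCI not_one_le_zero subsetI subset_empty)
    define S where "S = insert j x"
    define \<phi> where "\<phi> k t = (if k \<in> x then t - \<mu> k else 1) * (if k = j then t else 1)" for k t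
    have Sf: "finite S" and Ss: "S \<subseteq> {..<p}" using xf xs jp by (auto simp: S_def)
    have eq: "W x \<omega> * Z j \<omega> = (\<Prod>k\<in>S. \<phi> k (Z k \<omega>))" for \<omega>
    proof -
      have "(\<Prod>k\<in>S. \<phi> k (Z k \<omega>)) = (\<Prod>k\<in>S. (if k \<in> x then Z k \<omega> - \<mu> k else 1)) * (\<Prod>k\<in>S. (if k = j then Z k \<omega> else 1))"
        unfolding \<phi>_def by (rule prod.distrib)
      also have "(\<Prod>k\<in>S. (if k = j then Z k \<omega> else 1)) = Z j \<omega>"
        using Sf by (simp add: prod.delta S_def)
      also have "(\<Prod>k\<in>S. (if k \<in> x then Z k \<omega> - \<mu> k else 1)) = W x \<omega>"
        using Sf xf unfolding W_def demeaned_interaction_def S_def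
        by (simp add: prod.If_cases Int_absorb1 Int_absorb2 subset_insertI)
      finally show ?thesis by simp
    qed
    have [measurable]: "\<phi> k \<in> borel_measurable borel" for k unfolding \<phi>_def by measurable
    have ind: "indep_vars (\<lambda>_. borel) (\<lambda>k \<omega>. \<phi> k (Z k \<omega>)) S"
      by (rule indep_vars_compose2[OF indep_vars_subset[OF indep Ss]]) simp
    have intk: "integrable M (\<lambda>\<omega>. \<phi> k (Z k \<omega>))" if "k \<in> S" for k
    proof (rule integrable_const_bound[where B="(1 + \<bar>\<mu> k\<bar>)"])
      show "AE \<omega> in M. norm (\<phi> k (Z k \<omega>)) \<le> 1 + \<bar>\<mu> k\<bar>"
      proof (rule AE_I2)
        fix \<omega> assume "\<omega> \<in> space M"
        then have "Z k \<omega> \<in> {0,1}" using Z_bin that Ss by auto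
        then show "norm (\<phi> k (Z k \<omega>)) \<le> 1 + \<bar>\<mu> k\<bar>" unfolding \<phi>_def by auto
      qed
    qed (use that Ss in auto)
    have "(\<integral>\<omega>. W x \<omega> * Z j \<omega> \<partial>M) = (\<integral>\<omega>. (\<Prod>k\<in>S. \<phi> k (Z k \<omega>)) \<partial>M)"
      by (simp add: eq)
    also have "\<dots> = (\<Prod>k\<in>S. \<integral>\<omega>. \<phi> k (Z k \<omega>) \<partial>M)"
      by (rule indep_vars_lebesgue_integral[OF Sf ind intk])
    also have "\<dots> = 0"
    proof (rule prod_zero[OF Sf], rule bexI[of _ i])
      have "(\<integral>\<omega>. \<phi> i (Z i \<omega>) \<partial>M) = (\<integral>\<omega>. Z i \<omega> - \<mu> i \<partial>M)"
        using i by (simp add: \<phi>_def)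
      also have "\<dots> = 0" using Zint[of i] i xs prob_space by (auto simp: \<mu>_def)
      finally show "(\<integral>\<omega>. \<phi> i (Z i \<omega>) \<partial>M) = 0" .
    qed (use i in \<open>auto simp: S_def\<close>)
    finally show ?thesis .
  qed
  define R where "R \<omega> = restrict (\<lambda>j. Z j \<omega>) {..<p}" for \<omega>
  have R_meas: "R \<in> measurable M (PiM {..<p} (\<lambda>_. borel))"
    unfolding R_def by (rule measurable_restrict) auto
  have R_space: "R \<in> space M \<rightarrow> space (PiM {..<p} (\<lambda>_. borel :: real measure))"
    using R_meas by (auto intro: measurable_space)
  have subalg: "subalgebra M F"
    unfolding subalgebra_def F_def instr_sigma_def R_def[symmetric]
  proof
    show "space (vimage_algebra (space M) R (Pi\<^sub>M {..<p} (\<lambda>_. borel))) = space M" by simp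
    show "sets (vimage_algebra (space M) R (Pi\<^sub>M {..<p} (\<lambda>_. borel))) \<subseteq> sets M"
      using R_meas by (auto simp: sets_vimage_algebra2[OF R_space] intro: measurable_sets)
  qed
  interpret Fs: finite_measure_subalgebra M F
    by (intro finite_measure_subalgebra.intro finite_measure_subalgebra_axioms.intro subalg)
      unfold_locales
  have WF: "W x \<in> borel_measurable F" if "x \<subseteq> {..<p}" for x
  proof -
    define g where "g z = (\<Prod>i\<in>x. z i - \<mu> i)" for z :: "nat \<Rightarrow> real"
    have g: "g \<in> borel_measurable (PiM {..<p} (\<lambda>_. borel))"
      unfolding g_def using that by (intro borel_measurable_prod borel_measurable_diff) auto
    have "(\<lambda>\<omega>. g (R \<omega>)) \<in> borel_measurable F"
      unfolding F_def instr_sigma_def R_def[symmetric]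
      by (rule measurable_compose[OF measurable_vimage_algebra1[OF R_space] g])
    moreover have "(\<lambda>\<omega>. g (R \<omega>)) = W x"
      unfolding g_def R_def W_def demeaned_interaction_def using that
      by (intro ext prod.cong) auto
    ultimately show ?thesis by simp
  qed
  have Y00_meas [measurable]: "Y00 \<in> borel_measurable M" using Y00_int unfolding Y00_def z0_def by auto
  have WY00_int: "integrable M (\<lambda>\<omega>. W x \<omega> * Y00 \<omega>)" if "x \<subseteq> {..<p}" for x
  proof (rule Bochner_Integration.integrable_bound[where f="\<lambda>\<omega>. C x * Y00 \<omega>"])
    show "integrable M (\<lambda>\<omega>. C x * Y00 \<omega>)" using Y00_int unfolding Y00_def z0_def by auto
    show "(\<lambda>\<omega>. W x \<omega> * Y00 \<omega>) \<in> borel_measurable M" using Wmeas[OF that] by measurable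
    show "AE \<omega> in M. norm (W x \<omega> * Y00 \<omega>) \<le> norm (C x * Y00 \<omega>)"
    proof (rule AE_I2)
      fix \<omega> assume "\<omega> \<in> space M"
      then have "\<bar>W x \<omega>\<bar> \<le> C x" using Wbound that by auto
      then show "norm (W x \<omega> * Y00 \<omega>) \<le> norm (C x * Y00 \<omega>)"
        by (auto simp: abs_mult intro: mult_right_mono)
    qed
  qed
  have WZ_int: "integrable M (\<lambda>\<omega>. W x \<omega> * Z j \<omega>)" if "x \<subseteq> {..<p}" "j < p" for x j
  proof (rule integrable_const_bound[where B="C x"])
    show "AE \<omega> in M. norm (W x \<omega> * Z j \<omega>) \<le> C x"
    proof (rule AE_I2)
      fix \<omega> assume om: "\<omega> \<in> space M"
      then have "\<bar>W x \<omega>\<bar> \<le> C x" using Wbound that by auto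
      moreover have "Z j \<omega> \<in> {0,1}" using Z_bin that om by auto
      ultimately show "norm (W x \<omega> * Z j \<omega>) \<le> C x" by auto
    qed
  qed (use Wmeas that in auto)
  have EY00: "(\<integral>\<omega>. W x \<omega> * Y00 \<omega> \<partial>M) = 0" if xI: "x \<in> I" for x
  proof -
    have xs: "x \<subseteq> {..<p}" using I_sub xI by auto
    have "(\<integral>\<omega>. W x \<omega> * Y00 \<omega> \<partial>M) = (\<integral>\<omega>. W x \<omega> * real_cond_exp M F Y00 \<omega> \<partial>M)"
      by (rule Fs.real_cond_exp_intg(2)[symmetric, OF WY00_int[OF xs] WF[OF xs] Y00_meas])
    also have "\<dots> = (\<integral>\<omega>. W x \<omega> * (\<Sum>j<p. Z j \<omega> * \<psi>s j) \<partial>M)"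
    proof (rule integral_cong_AE)
      show "(\<lambda>\<omega>. W x \<omega> * real_cond_exp M F Y00 \<omega>) \<in> borel_measurable M"
        using Wmeas[OF xs] measurable_from_subalg[OF subalg borel_measurable_cond_exp] by measurable
      show "(\<lambda>\<omega>. W x \<omega> * (\<Sum>j<p. Z j \<omega> * \<psi>s j)) \<in> borel_measurable M"
        using Wmeas[OF xs] by measurable
      show "AE \<omega> in M. W x \<omega> * real_cond_exp M F Y00 \<omega> = W x \<omega> * (\<Sum>j<p. Z j \<omega> * \<psi>s j)"
        using cond_exp unfolding F_def Y00_def z0_def by auto
    qed
    also have "\<dots> = (\<integral>\<omega>. (\<Sum>j<p. \<psi>s j * (W x \<omega> * Z j \<omega>)) \<partial>M)"
      by (simp add: sum_distrib_left mult_ac)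
    also have "\<dots> = (\<Sum>j<p. \<psi>s j * (\<integral>\<omega>. W x \<omega> * Z j \<omega> \<partial>M))"
      using WZ_int[OF xs] by (simp add: integral_sum)
    also have "\<dots> = 0" using E0[OF xI] by simp
    finally show ?thesis .
  qed
  have Wdef: "(\<lambda>\<omega>. demeaned_interaction Z (\<lambda>j. expectation (Z j)) x \<omega>) = W x" for x
    unfolding W_def \<mu>_def[abs_def] by simp
  have Yeq: "Y \<omega> = Y00 \<omega> + D \<omega> * \<beta>s + (\<Sum>j<p. Z j \<omega> * \<zeta>s j)" if om: "\<omega> \<in> space M" for \<omega>
  proof -
    have z0b: "z0 \<in> binvecs p" unfolding z0_def binvecs_def by auto
    have Rb: "R \<omega> \<in> binvecs p" unfolding R_def binvecs_def using Z_bin om by auto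
    have "Ypo (D \<omega>) (R \<omega>) \<omega> - Ypo 0 z0 \<omega> = (D \<omega> - 0) * \<beta>s + (\<Sum>j<p. (R \<omega> j - z0 j) * \<zeta>s j)"
      by (rule alice[OF om zero_D D_in[OF om] z0b Rb])
    moreover have "(\<Sum>j<p. (R \<omega> j - z0 j) * \<zeta>s j) = (\<Sum>j<p. Z j \<omega> * \<zeta>s j)"
      unfolding R_def z0_def by (intro sum.cong) auto
    moreover have "Y \<omega> = Ypo (D \<omega>) (R \<omega>) \<omega>" using Y_obs[OF om] unfolding R_def .
    ultimately show ?thesis unfolding Y00_def by simp
  qed
  have key: "(\<integral>\<omega>. W x \<omega> * (Y \<omega> - D \<omega> * \<beta>) \<partial>M) = (\<beta>s - \<beta>) * (\<integral>\<omega>. W x \<omega> * D \<omega> \<partial>M)"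
    if xI: "x \<in> I" for x \<beta>
  proof -
    have xs: "x \<subseteq> {..<p}" using I_sub xI by auto
    have intD: "integrable M (\<lambda>\<omega>. W x \<omega> * D \<omega>)" using int_D[of x] xI Wdef[of x] unfolding I_def by simp
    have "(\<integral>\<omega>. W x \<omega> * (Y \<omega> - D \<omega> * \<beta>) \<partial>M) =
        (\<integral>\<omega>. (W x \<omega> * Y00 \<omega> + (\<Sum>j<p. \<zeta>s j * (W x \<omega> * Z j \<omega>))) + (\<beta>s - \<beta>) * (W x \<omega> * D \<omega>) \<partial>M)"
    proof (rule Bochner_Integration.integral_cong[OF refl])
      fix \<omega> assume "\<omega> \<in> space M"
      from Yeq[OF this] show "W x \<omega> * (Y \<omega> - D \<omega> * \<beta>) = (W x \<omega> * Y00 \<omega> + (\<Sum>j<p. \<zeta>s j * (W x \<omega> * Z j \<omega>))) + (\<beta>s - \<beta>) * (W x \<omega> * D \<omega>)"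
        by (simp add: algebra_simps sum_distrib_left)
    qed
    also have "\<dots> = ((\<integral>\<omega>. W x \<omega> * Y00 \<omega> \<partial>M) + (\<Sum>j<p. \<zeta>s j * (\<integral>\<omega>. W x \<omega> * Z j \<omega> \<partial>M))) + (\<beta>s - \<beta>) * (\<integral>\<omega>. W x \<omega> * D \<omega> \<partial>M)"
    proof -
      have iS: "integrable M (\<lambda>\<omega>. \<Sum>j<p. \<zeta>s j * (W x \<omega> * Z j \<omega>))"
        using WZ_int[OF xs] by (intro Bochner_Integration.integrable_sum integrable_mult_right) auto
      have iA: "integrable M (\<lambda>\<omega>. W x \<omega> * Y00 \<omega> + (\<Sum>j<p. \<zeta>s j * (W x \<omega> * Z j \<omega>)))"
        using iS WY00_int[OF xs] by (rule Bochner_Integration.integrable_add[rotated])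
      have iB: "integrable M (\<lambda>\<omega>. (\<beta>s - \<beta>) * (W x \<omega> * D \<omega>))"
        using intD by (rule integrable_mult_right)
      show ?thesis
        apply (subst Bochner_Integration.integral_add[OF iA iB])
        apply (subst Bochner_Integration.integral_add[OF WY00_int[OF xs] iS])
        apply (subst Bochner_Integration.integral_sum)
        using WZ_int[OF xs] by auto
    qed
    also have "\<dots> = (\<beta>s - \<beta>) * (\<integral>\<omega>. W x \<omega> * D \<omega> \<partial>M)"
      using EY00[OF xI] E0[OF xI] by simp
    finally show ?thesis .
  qed
  obtain x0 where x0: "x0 \<in> I" "(\<integral>\<omega>. W x0 \<omega> * D \<omega> \<partial>M) \<noteq> 0"
  proof -
    have "\<exists>x\<in>I. (\<integral>\<omega>. W x \<omega> * D \<omega> \<partial>M) \<noteq> 0"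
    proof (rule ccontr)
      assume "\<not> ?thesis"
      then have "(\<lambda>x\<in>interaction_index p q. - expectation
          (\<lambda>\<omega>. demeaned_interaction Z (\<lambda>j. expectation (Z j)) x \<omega> * D \<omega>))
        = (\<lambda>x\<in>interaction_index p q. 0)"
        unfolding I_def by (intro restrict_ext) (simp add: Wdef)
      with relevance show False by simp
    qed
    then show ?thesis using that by blast
  qed
  show ?thesis
  proof (intro equalityI subsetI)
    fix \<beta> assume "\<beta> \<in> {\<beta>::real. (\<lambda>x\<in>interaction_index p q. expectation
            (\<lambda>\<omega>. demeaned_interaction Z (\<lambda>j. expectation (Z j)) x \<omega> * (Y \<omega> - D \<omega> * \<beta>)))
          = (\<lambda>x\<in>interaction_index p q. 0)}"
    then have "(\<lambda>x\<in>I. (\<integral>\<omega>. W x \<omega> * (Y \<omega> - D \<omega> * \<beta>) \<partial>M)) x0 = (\<lambda>x\<in>I. 0::real) x0"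
      unfolding I_def by (simp add: Wdef)
    then have "(\<beta>s - \<beta>) * (\<integral>\<omega>. W x0 \<omega> * D \<omega> \<partial>M) = 0" using x0 key by simp
    then show "\<beta> \<in> {\<beta>s}" using x0 by simp
  next
    fix \<beta> assume "\<beta> \<in> {\<beta>s}"
    then show "\<beta> \<in> {\<beta>::real. (\<lambda>x\<in>interaction_index p q. expectation
            (\<lambda>\<omega>. demeaned_interaction Z (\<lambda>j. expectation (Z j)) x \<omega> * (Y \<omega> - D \<omega> * \<beta>)))
          = (\<lambda>x\<in>interaction_index p q. 0)}"
      using key unfolding I_def by (auto intro!: restrict_ext simp: Wdef)
  qed
qed

end
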